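(* Let $R$ be an integral domain, let $\mathbb{F}$ be a field containing $R$ in which the polynomials below split, and let $h,y\in R$ be nonzero. Let $a=(a_n)_{n\ge 0}$ be a linear recurrent sequence over $R$ of degree $r$ with characteristic polynomial $$f(t)=t^r+\sum_{i=1}^r(-1)^i\sigma_i t^{r-i}\in R[t],$$ whose zeros in $\mathbb{F}$ (with multiplicity) are $\alpha_1,\ldots,\alpha_r$, so that $\sigma_i$ is the $i$-th elementary symmetric function of $\alpha_1,\dots,\alpha_r$. Let $b=L^{(h,y)}(a)$, i.e. $b_n=\sum_{i=0}^n\binom{n}{i}h^iy^{n-i}a_i$. Then $b$ is a linear recurrent sequence of degree $r$ whose characteristic polynomial $g(t)$ has zeros $h\alpha_1+y,\ldots,h\alpha_r+y$. Moreover $$g(t)=t^r+\sum_{i=1}^r(-1)^i\overline{\sigma_i}\,t^{r-i},\qquad \overline{\sigma_i}=\sum_{k=0}^{i}\binom{r-k}{i-k}h^k y^{i-k}\sigma_k\quad (i=1,\ldots,r),$$ with the convention $\sigma_0=1$.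
   Context: A linear recurrent sequence of degree $r$ over $R$ with characteristic polynomial $f(t)=t^r-c_1t^{r-1}-\dots-c_r$ is a sequence $(a_n)_{n\ge0}$ in $R$ with $a_{n+r}=c_1a_{n+r-1}+\dots+c_ra_n$ for all $n\ge 0$. For $h,y\in R$ the generalized Binomial interpolated operator $L^{(h,y)}$ sends a sequence $a=(a_n)_{n\ge0}$ to the sequence $b$ with $b_n=\sum_{i=0}^n\binom{n}{i}h^iy^{n-i}a_i$ (in the paper it is introduced for nonzero $h,y$). *)

theory Defs
  imports "HOL-Computational_Algebra.Polynomial"
begin

text \<open>R is modelled as a subring of the ambient field 'a (the field F containing R).\<close>
definition subring_of :: "'a::field set \<Rightarrow> bool" where
  "subring_of R \<longleftrightarrow> 0 \<in> R \<and> 1 \<in> R \<and>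
     (\<forall>x\<in>R. \<forall>z\<in>R. x + z \<in> R \<and> x - z \<in> R \<and> x * z \<in> R)"

definition lrs_charpoly :: "'a::comm_ring_1 poly \<Rightarrow> (nat \<Rightarrow> 'a) \<Rightarrow> bool" where
  "lrs_charpoly f a \<longleftrightarrow> (\<exists>r c. f = monom 1 r - (\<Sum>i=1..r. monom (c i) (r - i)) \<and>
      (\<forall>n. a (n + r) = (\<Sum>i=1..r. c i * a (n + r - i))))"

definition binom_interp :: "'a::comm_ring_1 \<Rightarrow> 'a \<Rightarrow> (nat \<Rightarrow> 'a) \<Rightarrow> nat \<Rightarrow> 'a" where
  "binom_interp h y a n = (\<Sum>i=0..n. of_nat (n choose i) * h ^ i * y ^ (n - i) * a i)"

end

theory Submission
  imports Defs
begin

definition polyop :: "'a::comm_ring_1 poly \<Rightarrow> (nat \<Rightarrow> 'a) \<Rightarrow> nat \<Rightarrow> 'a" where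
  "polyop p a n = (\<Sum>k<Suc (degree p). coeff p k * a (n + k))"

lemma polyop_bound: "degree p < N \<Longrightarrow> polyop p a n = (\<Sum>k<N. coeff p k * a (n + k))"
  unfolding polyop_def
  by (rule sum.mono_neutral_left) (auto simp: coeff_eq_0)

lemma polyop_add: "polyop (p + q) a n = polyop p a n + polyop q a n"
proof -
  define N where "N = Suc (degree p + degree q)"
  have "degree (p + q) < N" using degree_add_le_max[of p q] unfolding N_def by linarith
  then show ?thesis
    by (simp add: polyop_bound[of _ N] N_def sum.distrib algebra_simps)
qed

lemma polyop_smult: "polyop (smult c p) a n = c * polyop p a n"
proof -
  have "degree (smult c p) < Suc (degree p)" using degree_smult_le[of c p] by linarith
  then show ?thesis
    by (simp add: polyop_bound[of _ "Suc (degree p)"] sum_distrib_left algebra_simps)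
qed

lemma polyop_0 [simp]: "polyop 0 a n = 0"
  by (simp add: polyop_def)

lemma polyop_zero_seq [simp]: "polyop p (\<lambda>_. 0) n = 0"
  by (simp add: polyop_def)

lemma polyop_sum: "polyop (\<Sum>i\<in>A. f i) a n = (\<Sum>i\<in>A. polyop (f i) a n)"
  by (induction A rule: infinite_finite_induct) (auto simp: polyop_add)

lemma polyop_monom: "polyop (monom c k) a n = c * a (n + k)"
proof -
  have "degree (monom c k) < Suc k" by (simp add: degree_monom_le le_imp_less_Suc)
  then show ?thesis
    by (simp add: polyop_bound[of _ "Suc k"] coeff_monom)
qed

lemma polyop_pCons: "polyop (pCons c p) a n = c * a n + polyop p a (Suc n)"
proof -
  define N where "N = Suc (degree p)"
  have "degree (pCons c p) < Suc N" unfolding N_def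
    by (simp add: degree_pCons_le le_imp_less_Suc)
  then have "polyop (pCons c p) a n = (\<Sum>k<Suc N. coeff (pCons c p) k * a (n + k))"
    by (rule polyop_bound)
  also have "\<dots> = c * a n + (\<Sum>k<N. coeff p k * a (Suc n + k))"
    by (subst sum.lessThan_Suc_shift) simp
  also have "\<dots> = c * a n + polyop p a (Suc n)"
    by (subst polyop_bound[of _ N]) (auto simp: N_def)
  finally show ?thesis .
qed

lemma polyop_mult: "polyop (p * q) a n = polyop p (polyop q a) n"
proof (induction p arbitrary: n rule: pCons_induct)
  case 0 then show ?case by simp
next
  case (pCons c p)
  have "pCons c p * q = smult c q + pCons 0 (p * q)" by simp
  then show ?case
    by (simp add: polyop_add polyop_smult polyop_pCons pCons.IH)
qed

lemma polyop_pcompose: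
  "polyop p (\<lambda>m. polyop (q ^ m) a 0) n = polyop (q ^ n * pcompose p q) a 0"
proof (induction p arbitrary: n rule: pCons_induct)
  case 0 then show ?case by simp
next
  case (pCons c p)
  have "q ^ n * pcompose (pCons c p) q = smult c (q ^ n) + q ^ Suc n * pcompose p q"
    by (simp add: pcompose_pCons algebra_simps)
  then show ?case
    by (simp add: polyop_add polyop_smult polyop_pCons pCons.IH)
qed

lemma triangle_swap:
  "(\<Sum>i=0..(r::nat). \<Sum>k=0..i. F i k) = (\<Sum>k=0..r. \<Sum>i=k..r. (F i k :: 'b::comm_monoid_add))"
proof (induction r)
  case 0 then show ?case by simp
next
  case (Suc r)
  have "(\<Sum>k=0..Suc r. \<Sum>i=k..Suc r. F i k) = (\<Sum>k=0..r. \<Sum>i=k..Suc r. F i k) + F (Suc r) (Suc r)"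
    by simp
  also have "(\<Sum>k=0..r. \<Sum>i=k..Suc r. F i k) = (\<Sum>k=0..r. (\<Sum>i=k..r. F i k) + F (Suc r) k)"
    by (intro sum.cong) auto
  finally show ?case using Suc by (simp add: sum.distrib add_ac)
qed
lemma linear_power_binom:
  "([:c, 1:] :: 'a::comm_ring_1 poly) ^ m = (\<Sum>j=0..m. monom (of_nat (m choose j) * c ^ j) (m - j))"
proof -
  have "[:c, 1:] = [:c:] + monom (1::'a) 1" by (simp add: monom_Suc monom_0)
  then have "[:c, 1:] ^ m = (\<Sum>j\<le>m. of_nat (m choose j) * [:c:] ^ j * monom 1 1 ^ (m - j))"
    by (simp add: binomial_ring)
  also have "\<dots> = (\<Sum>j=0..m. monom (of_nat (m choose j) * c ^ j) (m - j))"
    unfolding atMost_atLeast0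
  proof (intro sum.cong refl)
    fix j
    have "of_nat (m choose j) * [:c:] ^ j * monom (1::'a) 1 ^ (m - j) = monom (of_nat (m choose j)) 0 * monom (c ^ j) 0 * monom 1 (m - j)"
      by (simp add: monom_power of_nat_poly flip: monom_0)
    also have "\<dots> = monom (of_nat (m choose j) * c ^ j) (m - j)" by (simp add: mult_monom)
    finally show "of_nat (m choose j) * [:c:] ^ j * monom (1::'a) 1 ^ (m - j) = monom (of_nat (m choose j) * c ^ j) (m - j)" .
  qed
  finally show ?thesis .
qed
lemma smult_sum_right: "smult c (\<Sum>i\<in>A. f i) = (\<Sum>i\<in>A. smult c (f i))"
  by (induction A rule: infinite_finite_induct) (simp_all add: smult_add_right)

lemma sigma_bar:
  fixes \<sigma> :: "nat \<Rightarrow> 'a::comm_ring_1"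
  assumes "\<sigma> 0 = 1"
  shows "monom 1 r + (\<Sum>i=1..r. monom ((-1) ^ i *
               (\<Sum>k=0..i. of_nat ((r - k) choose (i - k)) * h ^ k * y ^ (i - k) * \<sigma> k)) (r - i))
       = (\<Sum>k=0..r. smult ((-1) ^ k * \<sigma> k * h ^ k) ([:-y, 1:] ^ (r - k)))"
proof -
  define T where "T i k = monom ((-1) ^ i * (of_nat ((r - k) choose (i - k)) * h ^ k * y ^ (i - k) * \<sigma> k)) (r - i)" for i k
  have "monom 1 r + (\<Sum>i=1..r. monom ((-1) ^ i *
               (\<Sum>k=0..i. of_nat ((r - k) choose (i - k)) * h ^ k * y ^ (i - k) * \<sigma> k)) (r - i))
      = (\<Sum>i=0..r. \<Sum>k=0..i. T i k)"
  proof -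
    have "(\<Sum>i=0..r. \<Sum>k=0..i. T i k) = (\<Sum>k=0..0. T 0 k) + (\<Sum>i=Suc 0..r. \<Sum>k=0..i. T i k)"
      by (rule sum.atLeast_Suc_atMost) simp
    also have "(\<Sum>k=0..0. T 0 k) = monom 1 r" by (simp add: T_def assms)
    also have "(\<Sum>i=Suc 0..r. \<Sum>k=0..i. T i k) = (\<Sum>i=1..r. monom ((-1) ^ i *
               (\<Sum>k=0..i. of_nat ((r - k) choose (i - k)) * h ^ k * y ^ (i - k) * \<sigma> k)) (r - i))"
      by (simp add: T_def sum_distrib_left monom_sum)
    finally show ?thesis by simp
  qed
  also have "\<dots> = (\<Sum>k=0..r. \<Sum>i=k..r. T i k)" by (rule triangle_swap)
  also have "\<dots> = (\<Sum>k=0..r. smult ((-1) ^ k * \<sigma> k * h ^ k) ([:-y, 1:] ^ (r - k)))"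
  proof (intro sum.cong refl)
    fix k assume k: "k \<in> {0..r}"
    have "(\<Sum>i=k..r. T i k) = (\<Sum>j=0..r-k. T (j + k) k)"
      using sum.shift_bounds_cl_nat_ivl[of "\<lambda>i. T i k" 0 k "r - k"] k by simp
    also have "\<dots> = (\<Sum>j=0..r-k. smult ((-1) ^ k * \<sigma> k * h ^ k)
                       (monom (of_nat ((r - k) choose j) * (-y) ^ j) (r - k - j)))"
    proof (intro sum.cong refl)
      fix j
      have "r - (j + k) = r - k - j" by simp
      moreover have "(-1) ^ (j + k) * (of_nat ((r - k) choose j) * h ^ k * y ^ j * \<sigma> k)
          = (-1) ^ k * \<sigma> k * h ^ k * (of_nat ((r - k) choose j) * (-y) ^ j)"
        by (simp add: power_add power_minus[of y] algebra_simps)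
      ultimately show "T (j + k) k = smult ((-1) ^ k * \<sigma> k * h ^ k)
                       (monom (of_nat ((r - k) choose j) * (-y) ^ j) (r - k - j))"
        by (simp add: T_def smult_monom)
    qed
    also have "\<dots> = smult ((-1) ^ k * \<sigma> k * h ^ k) ([:-y, 1:] ^ (r - k))"
      by (simp add: linear_power_binom smult_sum_right)
    finally show "(\<Sum>i=k..r. T i k) = smult ((-1) ^ k * \<sigma> k * h ^ k) ([:-y, 1:] ^ (r - k))" .
  qed
  finally show ?thesis .
qed


lemma polyop_diff: "polyop (p - q) a n = polyop p a n - polyop q a n"
  using polyop_add[of p "smult (-1) q" a n] polyop_smult[of "-1" q a n] by simp

lemma pcompose_monom: "pcompose (monom c n) p = smult c (p ^ n)"
  by (induction n) (simp_all add: monom_0 monom_Suc pcompose_pCons)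

lemma lrs_polyop_zero:
  assumes "lrs_charpoly F a" shows "polyop F a m = 0"
proof -
  obtain r c where F: "F = monom 1 r - (\<Sum>i=1..r. monom (c i) (r - i))"
    and rec: "\<forall>n. a (n + r) = (\<Sum>i=1..r. c i * a (n + r - i))"
    using assms unfolding lrs_charpoly_def by blast
  have "polyop F a m = a (m + r) - (\<Sum>i=1..r. c i * a (m + (r - i)))"
    by (simp add: F polyop_diff polyop_sum polyop_monom)
  also have "(\<Sum>i=1..r. c i * a (m + (r - i))) = (\<Sum>i=1..r. c i * a (m + r - i))"
    by (intro sum.cong) auto
  finally show ?thesis using rec by simp
qed

lemma binom_interp_polyop:
  "binom_interp h y a m = polyop ([:y, h:] ^ m) a 0"
proof -
  have "[:y, h:] = monom h 1 + [:y:]" by (simp add: monom_Suc monom_0)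
  then have "[:y, h:] ^ m = (\<Sum>k\<le>m. of_nat (m choose k) * monom h 1 ^ k * [:y:] ^ (m - k))"
    by (simp add: binomial_ring)
  also have "\<dots> = (\<Sum>k=0..m. monom (of_nat (m choose k) * h ^ k * y ^ (m - k)) k)"
    unfolding atMost_atLeast0
  proof (intro sum.cong refl)
    fix k
    have "of_nat (m choose k) * monom h 1 ^ k * [:y:] ^ (m - k)
        = monom (of_nat (m choose k)) 0 * monom (h ^ k) k * monom (y ^ (m - k)) 0"
      by (simp add: monom_power of_nat_poly flip: monom_0)
    also have "\<dots> = monom (of_nat (m choose k) * h ^ k * y ^ (m - k)) k" by (simp add: mult_monom)
    finally show "of_nat (m choose k) * monom h 1 ^ k * [:y:] ^ (m - k) = monom (of_nat (m choose k) * h ^ k * y ^ (m - k)) k" .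
  qed
  finally show ?thesis
    by (simp add: polyop_sum polyop_monom binom_interp_def)
qed

lemma sigma_form:
  fixes \<sigma> :: "nat \<Rightarrow> 'a::comm_ring_1"
  assumes "\<sigma> 0 = 1"
  shows "monom 1 r + (\<Sum>i=1..r. monom ((-1) ^ i * \<sigma> i) (r - i)) = (\<Sum>k=0..r. monom ((-1) ^ k * \<sigma> k) (r - k))"
proof -
  have "(\<Sum>k=0..r. monom ((-1) ^ k * \<sigma> k) (r - k)) = monom ((-1) ^ 0 * \<sigma> 0) (r - 0) + (\<Sum>k=Suc 0..r. monom ((-1) ^ k * \<sigma> k) (r - k))"
    by (rule sum.atLeast_Suc_atMost) simp
  then show ?thesis using assms by simp
qed

theorem theorem4:
  fixes R :: "'a::field set" and a :: "nat \<Rightarrow> 'a" and \<sigma> :: "nat \<Rightarrow> 'a"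
    and \<alpha> :: "nat \<Rightarrow> 'a" and h y :: 'a and r :: nat
  assumes "subring_of R"
    and "\<forall>n. a n \<in> R"
    and "\<forall>i\<in>{1..r}. \<sigma> i \<in> R"
    and "h \<in> R" and "y \<in> R" and "h \<noteq> 0" and "y \<noteq> 0"
    and "\<sigma> 0 = 1"
    and "lrs_charpoly (monom 1 r + (\<Sum>i=1..r. monom ((-1) ^ i * \<sigma> i) (r - i))) a"
    and "monom 1 r + (\<Sum>i=1..r. monom ((-1) ^ i * \<sigma> i) (r - i))
           = (\<Prod>j<r. [:- \<alpha> j, 1:])"
  shows "lrs_charpoly
           (monom 1 r + (\<Sum>i=1..r. monom ((-1) ^ i *
               (\<Sum>k=0..i. of_nat ((r - k) choose (i - k)) * h ^ k * y ^ (i - k) * \<sigma> k)) (r - i)))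
           (binom_interp h y a)
       \<and> monom 1 r + (\<Sum>i=1..r. monom ((-1) ^ i *
               (\<Sum>k=0..i. of_nat ((r - k) choose (i - k)) * h ^ k * y ^ (i - k) * \<sigma> k)) (r - i))
           = (\<Prod>j<r. [:- (h * \<alpha> j + y), 1:])"
proof -
  define F where "F = monom 1 r + (\<Sum>i=1..r. monom ((-1) ^ i * \<sigma> i) (r - i))"
  define sb where "sb i = (\<Sum>k=0..i. of_nat ((r - k) choose (i - k)) * h ^ k * y ^ (i - k) * \<sigma> k)" for i
  define G where "G = monom 1 r + (\<Sum>i=1..r. monom ((-1) ^ i * sb i) (r - i))"
  have Fp: "F = (\<Prod>j<r. [:- \<alpha> j, 1:])" using assms(10) by (simp add: F_def)
  have lrsF: "lrs_charpoly F a" using assms(9) by (simp add: F_def)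
  have h0: "h \<noteq> 0" by fact
  define p where "p = [:- y / h, 1 / h:]"
  have G2: "G = (\<Prod>j<r. [:- (h * \<alpha> j + y), 1:])"
  proof -
    have "G = (\<Sum>k=0..r. smult ((-1) ^ k * \<sigma> k * h ^ k) ([:-y, 1:] ^ (r - k)))"
      unfolding G_def sb_def by (rule sigma_bar) fact
    also have "\<dots> = smult (h ^ r) (pcompose F p)"
    proof -
      have "smult (h ^ r) (pcompose F p) = (\<Sum>k=0..r. smult (h ^ r) (smult ((-1) ^ k * \<sigma> k) (p ^ (r - k))))"
        unfolding F_def sigma_form[of \<sigma>, OF assms(8)]
        by (simp add: pcompose_sum pcompose_monom smult_sum_right)
      also have "\<dots> = (\<Sum>k=0..r. smult ((-1) ^ k * \<sigma> k * h ^ k) ([:-y, 1:] ^ (r - k)))"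
      proof (intro sum.cong refl)
        fix k assume k: "k \<in> {0..r}"
        have hp: "smult h p = [:-y, 1:]" using h0 by (simp add: p_def)
        have "h ^ r = h ^ k * h ^ (r - k)" using k by (simp flip: power_add)
        then have "smult (h ^ r) (smult ((-1) ^ k * \<sigma> k) (p ^ (r - k)))
             = smult ((-1) ^ k * \<sigma> k * h ^ k) ((smult h p) ^ (r - k))"
          by (simp add: smult_power algebra_simps)
        then show "smult (h ^ r) (smult ((-1) ^ k * \<sigma> k) (p ^ (r - k)))
             = smult ((-1) ^ k * \<sigma> k * h ^ k) ([:-y, 1:] ^ (r - k))" using hp by simp
      qed
      finally show ?thesis by simp
    qed
    also have "\<dots> = (\<Prod>j<r. smult h (pcompose [:- \<alpha> j, 1:] p))"
      by (simp add: Fp pcompose_prod prod_smult)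
    also have "\<dots> = (\<Prod>j<r. [:- (h * \<alpha> j + y), 1:])"
      by (intro prod.cong refl) (simp add: p_def pcompose_pCons h0 field_simps)
    finally show ?thesis .
  qed
  define q where "q = [:y, h:]"
  have Gq: "pcompose G q = smult (h ^ r) F"
  proof -
    have "pcompose G q = (\<Prod>j<r. smult h [:- \<alpha> j, 1:])"
      unfolding G2 pcompose_prod
      by (intro prod.cong refl) (simp add: q_def pcompose_pCons algebra_simps)
    also have "\<dots> = smult (h ^ r) F" by (subst prod_smult) (simp add: Fp)
    finally show ?thesis .
  qed
  have zero: "polyop G (binom_interp h y a) n = 0" for n
  proof -
    have "polyop G (binom_interp h y a) n = polyop G (\<lambda>m. polyop (q ^ m) a 0) n"
    proof -
      have e: "binom_interp h y a = (\<lambda>m. polyop (q ^ m) a 0)"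
        unfolding q_def by (rule ext) (rule binom_interp_polyop)
      show ?thesis by (simp only: e)
    qed
    also have "\<dots> = polyop (q ^ n * pcompose G q) a 0" by (rule polyop_pcompose)
    also have "\<dots> = h ^ r * polyop (q ^ n) (polyop F a) 0"
      by (simp add: Gq polyop_smult polyop_mult)
    also have "polyop F a = (\<lambda>_. 0)" using lrs_polyop_zero[OF lrsF] by auto
    finally show ?thesis by simp
  qed
  have "lrs_charpoly G (binom_interp h y a)"
    unfolding lrs_charpoly_def
  proof (intro exI conjI allI)
    show "G = monom 1 r - (\<Sum>i=1..r. monom (- ((-1) ^ i * sb i)) (r - i))"
      by (simp add: G_def sum_negf flip: minus_monom)
    fix n
    let ?b = "binom_interp h y a"
    have "polyop G ?b n = ?b (n + r) + (\<Sum>i=1..r. (-1) ^ i * sb i * ?b (n + (r - i)))"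
      by (simp add: G_def polyop_add polyop_sum polyop_monom)
    also have "(\<Sum>i=1..r. (-1) ^ i * sb i * ?b (n + (r - i))) = (\<Sum>i=1..r. (-1) ^ i * sb i * ?b (n + r - i))"
      by (intro sum.cong) auto
    finally have "?b (n + r) = - (\<Sum>i=1..r. (-1) ^ i * sb i * ?b (n + r - i))"
      using zero[of n] by (simp add: eq_neg_iff_add_eq_0)
    then show "?b (n + r) = (\<Sum>i=1..r. - ((-1) ^ i * sb i) * ?b (n + r - i))"
      by (simp add: sum_negf)
  qed
  then show ?thesis using G2 unfolding G_def sb_def by simp
qed

end
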